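(* Let $A$ be a non-empty set and $\phi\in\ell_1(A)$, regarded as the functional $\phi(x^* )=\sum_{a\in A}\phi(a)x^*(a)$ on $\ell_\infty(A)$. Then the function $g_\phi:\ell_\infty(A)\to\mathbb R_+$, $g_\phi(x^* )=|\phi(|x^*|)|$, belongs to $FBL[\ell_1(A)]$.
   Context: For a real Banach space $E$ with dual $E^*$ and closed unit ball $B_E$, let $H[E]$ be the vector space of all positively homogeneous functions $f:E^*\to\mathbb R$ ($f(\lambda x^* )=\lambda f(x^* )$ for $\lambda>0$). For $f\in H[E]$ put $\|f\|_{FBL[E]}:=\sup\{\sum_{k=1}^n|f(x_k^* )| : n\in\mathbb N,\ x_1^*,\dots,x_n^*\in E^*,\ \sup_{x\in B_E}\sum_{k=1}^n|x_k^*(x)|\le 1\}$. $H_0[E]:=\{f\in H[E]:\|f\|_{FBL[E]}<\infty\}$ is a Banach lattice with this norm and pointwise order/operations. For $x\in E$ let $\delta_x(x^* )=x^*(x)$. $FBL[E]$ is the closed sublattice of $H_0[E]$ generated by $\{\delta_x:x\in E\}$. Here $E=\ell_1(A)$ with $E^*$ identified with $\ell_\infty(A)$. *)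

theory Defs
  imports "HOL-Analysis.Analysis"
begin

text \<open>E = l_1(A) with A the (nonempty) universe of type 'a; E* = l_infinity(A).\<close>

definition l1 :: "('a \<Rightarrow> real) set" where
  "l1 = {x. (\<lambda>a. \<bar>x a\<bar>) summable_on UNIV}"

definition linf :: "('a \<Rightarrow> real) set" where
  "linf = {y. bounded (range y)}"

definition pair :: "('a \<Rightarrow> real) \<Rightarrow> ('a \<Rightarrow> real) \<Rightarrow> real" where
  "pair y x = (\<Sum>\<^sub>\<infinity>a. y a * x a)"

definition l1_ball :: "('a \<Rightarrow> real) set" where
  "l1_ball = {x \<in> l1. (\<Sum>\<^sub>\<infinity>a. \<bar>x a\<bar>) \<le> 1}"

definition fbl_admissible :: "('a \<Rightarrow> real) list \<Rightarrow> bool" where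
  "fbl_admissible ys \<longleftrightarrow> set ys \<subseteq> linf \<and>
     (\<forall>x\<in>l1_ball. (\<Sum>y\<leftarrow>ys. \<bar>pair y x\<bar>) \<le> 1)"

definition fbl_vals :: "(('a \<Rightarrow> real) \<Rightarrow> real) \<Rightarrow> real set" where
  "fbl_vals f = {(\<Sum>y\<leftarrow>ys. \<bar>f y\<bar>) | ys. fbl_admissible ys}"

definition fbl_norm :: "(('a \<Rightarrow> real) \<Rightarrow> real) \<Rightarrow> real" where
  "fbl_norm f = Sup (fbl_vals f)"

text \<open>Positively homogeneous on E* = l_infinity(A) (values outside linf are irrelevant).\<close>
definition pos_hom :: "(('a \<Rightarrow> real) \<Rightarrow> real) \<Rightarrow> bool" where
  "pos_hom f \<longleftrightarrow> (\<forall>y\<in>linf. \<forall>c::real. c > 0 \<longrightarrow> f (\<lambda>a. c * y a) = c * f y)"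

definition H0 :: "(('a \<Rightarrow> real) \<Rightarrow> real) set" where
  "H0 = {f. pos_hom f \<and> bdd_above (fbl_vals f)}"

definition delta :: "('a \<Rightarrow> real) \<Rightarrow> ('a \<Rightarrow> real) \<Rightarrow> real" where
  "delta x = (\<lambda>y. pair y x)"

inductive_set gen_sublattice :: "(('a \<Rightarrow> real) \<Rightarrow> real) set" where
  gen_delta: "x \<in> l1 \<Longrightarrow> delta x \<in> gen_sublattice"
| gen_add: "f \<in> gen_sublattice \<Longrightarrow> g \<in> gen_sublattice \<Longrightarrow> (\<lambda>y. f y + g y) \<in> gen_sublattice"
| gen_scale: "f \<in> gen_sublattice \<Longrightarrow> (\<lambda>y. c * f y) \<in> gen_sublattice"
| gen_max: "f \<in> gen_sublattice \<Longrightarrow> g \<in> gen_sublattice \<Longrightarrow> (\<lambda>y. max (f y) (g y)) \<in> gen_sublattice"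
| gen_min: "f \<in> gen_sublattice \<Longrightarrow> g \<in> gen_sublattice \<Longrightarrow> (\<lambda>y. min (f y) (g y)) \<in> gen_sublattice"

text \<open>FBL[l_1(A)]: the closure in H0 (w.r.t. the FBL norm) of the generated sublattice,
  which is the closed sublattice generated by the deltas.\<close>
definition FBL :: "(('a \<Rightarrow> real) \<Rightarrow> real) set" where
  "FBL = {f \<in> H0. \<forall>\<epsilon>>0. \<exists>g\<in>gen_sublattice. fbl_norm (\<lambda>y. f y - g y) < \<epsilon>}"

end

theory Submission
  imports Defs
begin

definition ee :: "'a \<Rightarrow> 'a \<Rightarrow> real" where
  "ee a = (\<lambda>b. if b = a then 1 else 0)"

lemma pair_ee: "pair y (ee a) = y a"
proof -
  have "pair y (ee a) = infsum (\<lambda>b. y b * ee a b) {a}"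
    unfolding pair_def by (rule infsum_cong_neutral) (auto simp: ee_def)
  then show ?thesis by (simp add: ee_def)
qed

lemma ee_ball: "ee a \<in> l1_ball"
proof -
  have h: "((\<lambda>b. \<bar>ee a b\<bar>) has_sum 1) UNIV"
    by (rule has_sum_finite_neutralI[of "{a}"]) (auto simp: ee_def)
  then show ?thesis unfolding l1_ball_def l1_def
    using has_sum_iff by fastforce
qed

lemma linf_bound: "y \<in> linf \<Longrightarrow> \<exists>M. \<forall>a. \<bar>y a\<bar> \<le> M"
  unfolding linf_def bounded_iff by auto

lemma l1_summ:
  assumes "\<phi> \<in> l1" "\<And>a. \<bar>c a\<bar> \<le> M"
  shows "(\<lambda>a. c a * \<phi> a) summable_on UNIV"
proof -
  have s: "(\<lambda>a. M * \<bar>\<phi> a\<bar>) summable_on UNIV"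
    using assms(1) unfolding l1_def by (simp add: summable_on_cmult_right)
  have "(\<lambda>a. norm (c a * \<phi> a)) summable_on UNIV"
  proof (rule summable_on_comparison_test[OF s])
    fix a show "norm (c a * \<phi> a) \<le> M * \<bar>\<phi> a\<bar>"
      using assms(2)[of a] by (simp add: abs_mult mult_right_mono)
  qed simp
  then show ?thesis using summable_on_iff_abs_summable_on_real by blast
qed

lemma norm_aux: "norm (\<bar>y::real\<bar> * p + - (\<bar>y\<bar> * q)) = \<bar>p - q\<bar> * \<bar>y\<bar>"
proof -
  have "\<bar>y\<bar> * p + - (\<bar>y\<bar> * q) = \<bar>y\<bar> * (p - q)" by (simp add: algebra_simps)
  then show ?thesis by (simp only: real_norm_def abs_mult abs_abs mult.commute)
qed

definition gg :: "('a \<Rightarrow> real) \<Rightarrow> ('a \<Rightarrow> real) \<Rightarrow> real" where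
  "gg \<phi> = (\<lambda>y. \<bar>pair (\<lambda>a. \<bar>y a\<bar>) \<phi>\<bar>)"

lemma pointwise:
  assumes "y \<in> linf" "\<phi> \<in> l1" "\<psi> \<in> l1"
  shows "\<bar>gg \<phi> y - gg \<psi> y\<bar> \<le> infsum (\<lambda>a. \<bar>\<phi> a - \<psi> a\<bar> * \<bar>y a\<bar>) UNIV"
proof -
  obtain M where M: "\<And>a. \<bar>y a\<bar> \<le> M" using linf_bound[OF assms(1)] by blast
  have M': "\<And>a. \<bar>\<bar>y a\<bar>\<bar> \<le> M" using M by simp
  have eq: "\<And>a. \<bar>y a\<bar> * \<phi> a + - (\<bar>y a\<bar> * \<psi> a) = \<bar>y a\<bar> * (\<phi> a - \<psi> a)"
    by (simp add: algebra_simps)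
  have s1: "(\<lambda>a. \<bar>y a\<bar> * \<phi> a) summable_on UNIV" by (rule l1_summ[OF assms(2) M'])
  have s2: "(\<lambda>a. \<bar>y a\<bar> * \<psi> a) summable_on UNIV" by (rule l1_summ[OF assms(3) M'])
  have h1: "((\<lambda>a. \<bar>y a\<bar> * \<phi> a) has_sum pair (\<lambda>a. \<bar>y a\<bar>) \<phi>) UNIV"
    using s1 unfolding pair_def by simp
  have h2: "((\<lambda>a. - (\<bar>y a\<bar> * \<psi> a)) has_sum - pair (\<lambda>a. \<bar>y a\<bar>) \<psi>) UNIV"
    using s2 unfolding pair_def by (simp add: has_sum_uminus)
  have h3: "((\<lambda>a. \<bar>y a\<bar> * \<phi> a + - (\<bar>y a\<bar> * \<psi> a)) has_sum
      (pair (\<lambda>a. \<bar>y a\<bar>) \<phi> + - pair (\<lambda>a. \<bar>y a\<bar>) \<psi>)) UNIV"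
    by (rule has_sum_add[OF h1 h2])
  have s3: "(\<lambda>a. \<bar>\<phi> a - \<psi> a\<bar> * \<bar>y a\<bar>) summable_on UNIV"
  proof -
    have "(\<lambda>a. norm (\<bar>y a\<bar> * \<phi> a + - (\<bar>y a\<bar> * \<psi> a))) summable_on UNIV"
      by (rule summable_on_iff_abs_summable_on_real[THEN iffD1, OF has_sum_imp_summable[OF h3]])
    moreover have "\<And>a. norm (\<bar>y a\<bar> * \<phi> a + - (\<bar>y a\<bar> * \<psi> a)) = \<bar>\<phi> a - \<psi> a\<bar> * \<bar>y a\<bar>"
      by (rule norm_aux)
    ultimately show ?thesis by simp
  qed
  have "norm (pair (\<lambda>a. \<bar>y a\<bar>) \<phi> + - pair (\<lambda>a. \<bar>y a\<bar>) \<psi>)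
       \<le> infsum (\<lambda>a. \<bar>\<phi> a - \<psi> a\<bar> * \<bar>y a\<bar>) UNIV"
  proof (rule norm_infsum_le[OF h3])
    show "((\<lambda>a. \<bar>\<phi> a - \<psi> a\<bar> * \<bar>y a\<bar>) has_sum infsum (\<lambda>a. \<bar>\<phi> a - \<psi> a\<bar> * \<bar>y a\<bar>) UNIV) UNIV"
      using s3 by simp
    fix a show "norm (\<bar>y a\<bar> * \<phi> a + - (\<bar>y a\<bar> * \<psi> a)) \<le> \<bar>\<phi> a - \<psi> a\<bar> * \<bar>y a\<bar>"
      using norm_aux by (rule eq_refl)
  qed
  moreover have "\<bar>gg \<phi> y - gg \<psi> y\<bar> \<le> norm (pair (\<lambda>a. \<bar>y a\<bar>) \<phi> + - pair (\<lambda>a. \<bar>y a\<bar>) \<psi>)"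
    unfolding gg_def by simp
  ultimately show ?thesis by linarith
qed


lemma l1_diff:
  assumes "\<phi> \<in> l1" "\<psi> \<in> l1"
  shows "(\<lambda>a. \<bar>\<phi> a - \<psi> a\<bar>) summable_on UNIV"
proof (rule summable_on_comparison_test)
  show "(\<lambda>a. \<bar>\<phi> a\<bar> + \<bar>\<psi> a\<bar>) summable_on UNIV"
    using assms unfolding l1_def by (intro summable_on_add) auto
qed auto

lemma list_has_sum:
  fixes w :: "'a \<Rightarrow> real" and ys :: "('a \<Rightarrow> real) list"
  assumes "\<And>y. y \<in> set ys \<Longrightarrow> (\<lambda>a. w a * \<bar>y a\<bar>) summable_on UNIV"
  shows "((\<lambda>a. w a * (\<Sum>y\<leftarrow>ys. \<bar>y a\<bar>)) has_sum (\<Sum>y\<leftarrow>ys. infsum (\<lambda>a. w a * \<bar>y a\<bar>) UNIV)) UNIV"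
  using assms
proof (induction ys)
  case Nil
  then show ?case by simp
next
  case (Cons z ys)
  have h1: "((\<lambda>a. w a * \<bar>z a\<bar>) has_sum infsum (\<lambda>a. w a * \<bar>z a\<bar>) UNIV) UNIV"
    using Cons.prems by simp
  have h2: "((\<lambda>a. w a * (\<Sum>y\<leftarrow>ys. \<bar>y a\<bar>)) has_sum (\<Sum>y\<leftarrow>ys. infsum (\<lambda>a. w a * \<bar>y a\<bar>) UNIV)) UNIV"
    using Cons.prems by (intro Cons.IH) auto
  have "((\<lambda>a. w a * \<bar>z a\<bar> + w a * (\<Sum>y\<leftarrow>ys. \<bar>y a\<bar>)) has_sum
     (infsum (\<lambda>a. w a * \<bar>z a\<bar>) UNIV + (\<Sum>y\<leftarrow>ys. infsum (\<lambda>a. w a * \<bar>y a\<bar>) UNIV))) UNIV"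
    by (rule has_sum_add[OF h1 h2])
  then show ?case by (simp add: distrib_left)
qed

lemma adm_col:
  assumes "fbl_admissible ys"
  shows "(\<Sum>y\<leftarrow>ys. \<bar>y a\<bar>) \<le> 1"
proof -
  have "(\<Sum>y\<leftarrow>ys. \<bar>pair y (ee a)\<bar>) \<le> 1"
    using assms unfolding fbl_admissible_def by (rule bspec[OF conjunct2 ee_ball])
  then show ?thesis by (simp add: pair_ee)
qed

lemma L3:
  assumes "\<phi> \<in> l1" "\<psi> \<in> l1" "fbl_admissible ys"
  shows "(\<Sum>y\<leftarrow>ys. \<bar>gg \<phi> y - gg \<psi> y\<bar>) \<le> infsum (\<lambda>a. \<bar>\<phi> a - \<psi> a\<bar>) UNIV"
proof -
  define w where "w = (\<lambda>a. \<bar>\<phi> a - \<psi> a\<bar>)"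
  have sw: "w summable_on UNIV" unfolding w_def by (rule l1_diff[OF assms(1,2)])
  have wl1: "w \<in> l1" using sw unfolding l1_def w_def by simp
  have lin: "set ys \<subseteq> linf" using assms(3) unfolding fbl_admissible_def by blast
  have sy: "(\<lambda>a. w a * \<bar>y a\<bar>) summable_on UNIV" if "y \<in> set ys" for y
  proof -
    have "y \<in> linf" using that lin by blast
    then obtain M where M: "\<And>a. \<bar>y a\<bar> \<le> M" using linf_bound by blast
    have "(\<lambda>a. \<bar>y a\<bar> * w a) summable_on UNIV"
      by (rule l1_summ[OF wl1]) (use M in simp)
    then show ?thesis by (simp add: mult.commute)
  qed
  have "(\<Sum>y\<leftarrow>ys. \<bar>gg \<phi> y - gg \<psi> y\<bar>) \<le> (\<Sum>y\<leftarrow>ys. infsum (\<lambda>a. w a * \<bar>y a\<bar>) UNIV)"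
    by (rule sum_list_mono) (use pointwise assms lin in \<open>auto simp: w_def\<close>)
  also have "\<dots> \<le> infsum w UNIV"
  proof (rule has_sum_mono[OF list_has_sum])
    show "(w has_sum infsum w UNIV) UNIV" using sw by simp
    fix a
    have "w a \<ge> 0" unfolding w_def by simp
    then show "w a * (\<Sum>y\<leftarrow>ys. \<bar>y a\<bar>) \<le> w a"
      using adm_col[OF assms(3), of a] by (simp add: mult_left_le)
  qed (rule sy)
  finally show ?thesis unfolding w_def .
qed

lemma L4:
  assumes "\<And>ys. fbl_admissible ys \<Longrightarrow> (\<Sum>y\<leftarrow>ys. \<bar>f y\<bar>) \<le> B"
  shows "fbl_norm f \<le> B" "bdd_above (fbl_vals f)"
proof -
  have ne: "fbl_vals f \<noteq> {}"
  proof -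
    have "fbl_admissible []" unfolding fbl_admissible_def by simp
    then show ?thesis unfolding fbl_vals_def by blast
  qed
  have ub: "\<And>v. v \<in> fbl_vals f \<Longrightarrow> v \<le> B" unfolding fbl_vals_def using assms by blast
  show "fbl_norm f \<le> B" unfolding fbl_norm_def by (rule cSup_least[OF ne ub])
  show "bdd_above (fbl_vals f)" using ub by (rule bdd_aboveI)
qed

lemma tail:
  assumes "\<phi> \<in> l1" "\<epsilon> > 0"
  shows "\<exists>F. finite F \<and> infsum (\<lambda>a. \<bar>\<phi> a - (if a \<in> F then \<phi> a else 0)\<bar>) UNIV < \<epsilon>"
proof -
  have s: "(\<lambda>a. \<bar>\<phi> a\<bar>) summable_on UNIV" using assms(1) unfolding l1_def by simp
  obtain F where F: "finite F" "dist (sum (\<lambda>a. \<bar>\<phi> a\<bar>) F) (infsum (\<lambda>a. \<bar>\<phi> a\<bar>) UNIV) \<le> \<epsilon>/2"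
    using infsum_finite_approximation[OF s, of "\<epsilon>/2"] assms(2) by auto
  have h1: "((\<lambda>a. \<bar>\<phi> a\<bar>) has_sum infsum (\<lambda>a. \<bar>\<phi> a\<bar>) UNIV) UNIV" using s by simp
  have h2: "((\<lambda>a. if a \<in> F then \<bar>\<phi> a\<bar> else 0) has_sum sum (\<lambda>a. \<bar>\<phi> a\<bar>) F) UNIV"
    by (rule has_sum_finite_neutralI[OF F(1)]) auto
  have h2': "((\<lambda>a. - (if a \<in> F then \<bar>\<phi> a\<bar> else 0)) has_sum - sum (\<lambda>a. \<bar>\<phi> a\<bar>) F) UNIV"
    using h2 by (simp only: has_sum_uminus minus_minus)
  have h3: "((\<lambda>a. \<bar>\<phi> a\<bar> + - (if a \<in> F then \<bar>\<phi> a\<bar> else 0)) has_sum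
      (infsum (\<lambda>a. \<bar>\<phi> a\<bar>) UNIV + - sum (\<lambda>a. \<bar>\<phi> a\<bar>) F)) UNIV"
    by (rule has_sum_add[OF h1 h2'])
  have eq: "(\<lambda>a. \<bar>\<phi> a\<bar> + - (if a \<in> F then \<bar>\<phi> a\<bar> else 0)) = (\<lambda>a. \<bar>\<phi> a - (if a \<in> F then \<phi> a else 0)\<bar>)"
    by (auto simp: fun_eq_iff)
  have "infsum (\<lambda>a. \<bar>\<phi> a - (if a \<in> F then \<phi> a else 0)\<bar>) UNIV
      = infsum (\<lambda>a. \<bar>\<phi> a\<bar>) UNIV + - sum (\<lambda>a. \<bar>\<phi> a\<bar>) F"
    by (rule infsumI[OF h3[unfolded eq]])
  also have "\<dots> < \<epsilon>" using F(2) assms(2) unfolding dist_real_def by arith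
  finally show ?thesis using F(1) by blast
qed


lemma ee_l1: "ee a \<in> l1"
  using ee_ball[of a] unfolding l1_ball_def by simp

lemma gs_abs:
  assumes "f \<in> gen_sublattice"
  shows "(\<lambda>y. \<bar>f y\<bar>) \<in> gen_sublattice"
proof -
  have "(\<lambda>y. max (f y) ((\<lambda>y. (-1) * f y) y)) \<in> gen_sublattice"
    by (rule gen_max[OF assms gen_scale[OF assms]])
  moreover have "(\<lambda>y. max (f y) ((\<lambda>y. (-1) * f y) y)) = (\<lambda>y. \<bar>f y\<bar>)"
    by (auto simp: fun_eq_iff max_def)
  ultimately show ?thesis by simp
qed

lemma gs_zero: "(\<lambda>y. 0) \<in> gen_sublattice"
proof -
  have "ee undefined \<in> l1" by (rule ee_l1)
  then have "(\<lambda>y. 0 * delta (ee undefined) y) \<in> gen_sublattice"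
    by (intro gen_scale gen_delta)
  then show ?thesis by simp
qed

lemma gs_sum:
  assumes "finite F" "\<And>a. a \<in> F \<Longrightarrow> h a \<in> gen_sublattice"
  shows "(\<lambda>y. \<Sum>a\<in>F. h a y) \<in> gen_sublattice"
  using assms
proof (induction F rule: finite_induct)
  case empty
  then show ?case using gs_zero by simp
next
  case (insert x F)
  have "(\<lambda>y. h x y + (\<lambda>y. \<Sum>a\<in>F. h a y) y) \<in> gen_sublattice"
    by (rule gen_add) (use insert in auto)
  then show ?case using insert by simp
qed

lemma approx_in:
  assumes "finite F"
  shows "gg (\<lambda>a. if a \<in> F then \<phi> a else 0) \<in> gen_sublattice"
proof -
  have ee1: "\<And>a. ee a \<in> l1" by (rule ee_l1)
  have "(\<lambda>y. \<bar>\<Sum>a\<in>F. \<phi> a * \<bar>delta (ee a) y\<bar>\<bar>) \<in> gen_sublattice"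
    by (intro gs_abs gs_sum assms gen_scale gen_delta ee1)
  moreover have "(\<lambda>y. \<bar>\<Sum>a\<in>F. \<phi> a * \<bar>delta (ee a) y\<bar>\<bar>) = gg (\<lambda>a. if a \<in> F then \<phi> a else 0)"
  proof
    fix y
    have "pair (\<lambda>a. \<bar>y a\<bar>) (\<lambda>a. if a \<in> F then \<phi> a else 0) = (\<Sum>a\<in>F. \<bar>y a\<bar> * \<phi> a)"
      unfolding pair_def by (rule infsumI, rule has_sum_finite_neutralI[OF assms]) auto
    then show "\<bar>\<Sum>a\<in>F. \<phi> a * \<bar>delta (ee a) y\<bar>\<bar> = gg (\<lambda>a. if a \<in> F then \<phi> a else 0) y"
      by (simp add: gg_def delta_def pair_ee mult.commute)
  qed
  ultimately show ?thesis by simp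
qed

theorem lemma4p8:
  fixes \<phi> :: "'a \<Rightarrow> real"
  assumes "\<phi> \<in> l1"
  shows "(\<lambda>y. \<bar>pair (\<lambda>a. \<bar>y a\<bar>) \<phi>\<bar>) \<in> FBL"
proof -
  have G: "(\<lambda>y. \<bar>pair (\<lambda>a. \<bar>y a\<bar>) \<phi>\<bar>) = gg \<phi>" by (simp add: gg_def)
  have z: "(\<lambda>a. 0::real) \<in> l1" unfolding l1_def by simp
  have gz: "gg (\<lambda>a. 0) y = 0" for y :: "'a \<Rightarrow> real" by (simp add: gg_def pair_def)
  have ph: "pos_hom (gg \<phi>)"
    unfolding pos_hom_def
  proof (intro ballI allI impI)
    fix y :: "'a \<Rightarrow> real" and c :: real
    assume "c > 0"
    have "pair (\<lambda>a. \<bar>c * y a\<bar>) \<phi> = infsum (\<lambda>a. c * (\<bar>y a\<bar> * \<phi> a)) UNIV"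
      unfolding pair_def using \<open>c > 0\<close> by (simp add: abs_mult mult.assoc)
    also have "\<dots> = c * pair (\<lambda>a. \<bar>y a\<bar>) \<phi>" unfolding pair_def by (rule infsum_cmult_right')
    finally show "gg \<phi> (\<lambda>a. c * y a) = c * gg \<phi> y"
      using \<open>c > 0\<close> by (simp add: gg_def abs_mult)
  qed
  have bd: "bdd_above (fbl_vals (gg \<phi>))"
  proof (rule L4(2))
    fix ys :: "('a \<Rightarrow> real) list" assume "fbl_admissible ys"
    from L3[OF assms z this] show "(\<Sum>y\<leftarrow>ys. \<bar>gg \<phi> y\<bar>) \<le> infsum (\<lambda>a. \<bar>\<phi> a - 0\<bar>) UNIV"
      by (simp add: gz)
  qed
  have ap: "\<exists>g\<in>gen_sublattice. fbl_norm (\<lambda>y. gg \<phi> y - g y) < \<epsilon>" if eps: "\<epsilon> > 0" for \<epsilon> :: real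
  proof -
    obtain F where F: "finite F" "infsum (\<lambda>a. \<bar>\<phi> a - (if a \<in> F then \<phi> a else 0)\<bar>) UNIV < \<epsilon>"
      using tail[OF assms eps] by blast
    define \<psi> where "\<psi> = (\<lambda>a. if a \<in> F then \<phi> a else 0)"
    have psi: "\<psi> \<in> l1"
    proof -
      have "(\<lambda>a. \<bar>\<psi> a\<bar>) summable_on UNIV"
        by (rule summable_on_comparison_test[of "\<lambda>a. \<bar>\<phi> a\<bar>"])
           (use assms in \<open>auto simp: l1_def \<psi>_def\<close>)
      then show ?thesis unfolding l1_def by simp
    qed
    have "fbl_norm (\<lambda>y. gg \<phi> y - gg \<psi> y) \<le> infsum (\<lambda>a. \<bar>\<phi> a - \<psi> a\<bar>) UNIV"
      by (rule L4(1)) (rule L3[OF assms psi])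
    then have "fbl_norm (\<lambda>y. gg \<phi> y - gg \<psi> y) < \<epsilon>" using F(2) unfolding \<psi>_def by linarith
    moreover have "gg \<psi> \<in> gen_sublattice" unfolding \<psi>_def by (rule approx_in[OF F(1)])
    ultimately show ?thesis by blast
  qed
  show ?thesis unfolding G FBL_def H0_def using ph bd ap by blast
qed

end
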